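(* Let $(X,d)$ be a complete metric space and $\mathcal S$ a semigroup acting on $X$. Assume there exists $k<\kappa(X)$ such that for all $(x,y)\in X\times X$ with $D(x,o(y))\le D(x,o(x))$ and for all $s\in\mathcal S$, $$\inf_{t\in\mathcal S^1} D(sx,o(tsy))\le k\,D(x,o(y)).$$ Then either all the orbits are unbounded or there exists $x\in X$ such that $sx=x$ for all $s\in\mathcal S$.
   Context: A semigroup action is a map $\mathcal S\times X\to X$, $(s,x)\mapsto sx$, with $(st)x=s(tx)$. $\mathcal S^1$ denotes $\mathcal S$ with an identity $1$ adjoined (acting as the identity map; $\mathcal S^1=\mathcal S$ if $\mathcal S$ already has an identity). The orbit of $x$ is $o(x)=\{x\}\cup\{sx:s\in\mathcal S\}$; for nonempty $C\subseteq X$, $D(x,C)=\sup\{d(x,y):y\in C\}$. $B(x,r)$ denotes the closed ball. For $c\ge1$, balls in $X$ are $c$-regular if for every $k'<c$ there are $\mu,\alpha\in(0,1)$ such that for all $x,y\in X$ and $r>0$ with $d(x,y)\ge(1-\mu)r$ there exists $z\in X$ with $B(x,(1+\mu)r)\cap B(y,k'(1+\mu)r)\subseteq B(z,\alpha r)$. The Lifschitz characteristic is $\kappa(X)=\sup\{c\ge1:\text{balls in }X\text{ are }c\text{-regular}\}$. *)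

theory Defs
  imports "HOL-Analysis.Analysis"
begin

definition semigroup_action :: "('s::semigroup_mult \<Rightarrow> 'a \<Rightarrow> 'a) \<Rightarrow> bool" where
  "semigroup_action act \<longleftrightarrow> (\<forall>s t x. act (s * t) x = act s (act t x))"

text \<open>Action of S^1: None is the adjoined identity.\<close>
definition act1 :: "('s \<Rightarrow> 'a \<Rightarrow> 'a) \<Rightarrow> 's option \<Rightarrow> 'a \<Rightarrow> 'a" where
  "act1 act t x = (case t of None \<Rightarrow> x | Some s \<Rightarrow> act s x)"

definition orbit :: "('s \<Rightarrow> 'a \<Rightarrow> 'a) \<Rightarrow> 'a \<Rightarrow> 'a set" where
  "orbit act x = {x} \<union> range (\<lambda>s. act s x)"

definition Dsup :: "'a::metric_space \<Rightarrow> 'a set \<Rightarrow> ereal" where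
  "Dsup x C = (SUP y\<in>C. ereal (dist x y))"

definition c_regular :: "'a::metric_space itself \<Rightarrow> real \<Rightarrow> bool" where
  "c_regular _ c \<longleftrightarrow>
     (\<forall>k'. k' < c \<longrightarrow> (\<exists>\<mu> \<alpha>. 0 < \<mu> \<and> \<mu> < 1 \<and> 0 < \<alpha> \<and> \<alpha> < 1 \<and>
        (\<forall>(x::'a) y r. r > 0 \<and> dist x y \<ge> (1 - \<mu>) * r \<longrightarrow>
           (\<exists>z. cball x ((1 + \<mu>) * r) \<inter> cball y (k' * (1 + \<mu>) * r) \<subseteq> cball z (\<alpha> * r)))))"

definition lifschitz_char :: "'a::metric_space itself \<Rightarrow> ereal" where
  "lifschitz_char T = Sup {ereal c | c. c \<ge> 1 \<and> c_regular T c}"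

end

theory Submission
  imports Defs
begin


lemma orbit_self: "x \<in> orbit act x" by (simp add: orbit_def)
lemma orbit_act: "act s x \<in> orbit act x" by (simp add: orbit_def)
lemma orbit_cases: "v \<in> orbit act x \<Longrightarrow> v = x \<or> (\<exists>s. v = act s x)" by (auto simp: orbit_def)
lemma orbit_act1: "act1 act t x \<in> orbit act x" by (cases t) (auto simp: act1_def orbit_def)

lemma orbit_mono:
  assumes sg: "semigroup_action act" and w: "w \<in> orbit act x"
  shows "orbit act w \<subseteq> orbit act x"
proof
  fix v assume v: "v \<in> orbit act w"
  show "v \<in> orbit act x"
  proof (cases "w = x")
    case True then show ?thesis using v by simp
  next
    case False
    then obtain s where s: "w = act s x" using orbit_cases[OF w] by blast
    show ?thesis
    proof (cases "v = w")
      case True then show ?thesis using s orbit_act by metis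
    next
      case False
      then obtain t where t: "v = act t w" using orbit_cases[OF v] by blast
      have "v = act (t * s) x" using sg t s by (simp add: semigroup_action_def)
      then show ?thesis using orbit_act by metis
    qed
  qed
qed

lemma Dsup_le: "(\<And>v. v \<in> C \<Longrightarrow> dist x v \<le> a) \<Longrightarrow> Dsup x C \<le> ereal a"
  unfolding Dsup_def by (auto intro: SUP_least)
lemma Dsup_ge: "v \<in> C \<Longrightarrow> ereal (dist x v) \<le> Dsup x C"
  unfolding Dsup_def by (rule SUP_upper)
lemma Dsup_lessD:
  assumes "Dsup x C < ereal b" "v \<in> C" shows "dist x v < b"
proof -
  have "ereal (dist x v) < ereal b" using Dsup_ge[OF assms(2), of x] assms(1) by (rule le_less_trans)
  then show ?thesis by simp
qed

lemma geom_Cauchy: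
  fixes x :: "nat \<Rightarrow> 'a::metric_space"
  assumes q: "0 \<le> q" "q < 1" and d: "\<And>n. dist (x n) (x (Suc n)) \<le> C * q^n"
  shows "Cauchy x"
proof -
  have "dist (x 0) (x 1) \<le> C" using d[of 0] by simp
  then have C0: "0 \<le> C" using zero_le_dist[of "x 0" "x 1"] by linarith
  have ind: "dist (x m) (x (m + j)) \<le> C * q^m * (1 - q^j) / (1 - q)" for m j
  proof (induction j)
    case 0 then show ?case by simp
  next
    case (Suc j)
    have "dist (x m) (x (m + Suc j)) \<le> dist (x m) (x (m + j)) + dist (x (m+j)) (x (Suc (m + j)))"
      by (simp add: dist_triangle)
    also have "\<dots> \<le> C * q^m * (1 - q^j) / (1 - q) + C * q^(m+j)"
      using Suc d[of "m+j"] by linarith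
    also have "\<dots> = C * q^m * (1 - q^Suc j) / (1 - q)"
      using q by (simp add: field_simps power_add)
    finally show ?case .
  qed
  have bnd: "dist (x m) (x n) \<le> C * q^m / (1 - q)" if mn: "m \<le> n" for m n
  proof -
    obtain j where n: "n = m + j" using le_Suc_ex[OF mn] by blast
    have "C * q^m * (1 - q^j) / (1 - q) \<le> C * q^m / (1 - q)"
      using q C0 by (intro divide_right_mono) (auto simp: mult_left_le zero_le_power)
    moreover have "dist (x m) (x n) \<le> C * q^m * (1 - q^j) / (1 - q)" using ind[of m j] n by simp
    ultimately show ?thesis by linarith
  qed
  show ?thesis
  proof (rule metric_CauchyI)
    fix e :: real assume e: "0 < e"
    have "\<exists>M. C * q^M / (1 - q) < e"
    proof (cases "C = 0")
      case True then show ?thesis using e by auto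
    next
      case False
      then have Cp: "0 < C" using C0 by simp
      have "0 < e * (1 - q) / C" using e q Cp by simp
      then obtain M where M: "q^M < e * (1 - q) / C" using real_arch_pow_inv q by blast
      then have "C * q^M < e * (1 - q)" using Cp by (simp add: field_simps)
      then show ?thesis using q by (auto simp: field_simps)
    qed
    then obtain M where M: "C * q^M / (1 - q) < e" by blast
    have mono: "C * q^m / (1 - q) \<le> C * q^M / (1 - q)" if "M \<le> m" for m
      using q C0 that by (intro divide_right_mono mult_left_mono power_decreasing) auto
    show "\<exists>M. \<forall>m\<ge>M. \<forall>n\<ge>M. dist (x m) (x n) < e"
    proof (intro exI allI impI)
      fix m n assume "M \<le> m" "M \<le> n"
      show "dist (x m) (x n) < e"
      proof (cases "m \<le> n")
        case True then show ?thesis using bnd[of m n] mono[OF \<open>M \<le> m\<close>] M by linarith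
      next
        case False then show ?thesis using bnd[of n m] mono[OF \<open>M \<le> n\<close>] M
          by (simp add: dist_commute)
      qed
    qed
  qed
qed




locale fpctx =
  fixes act :: "'s::semigroup_mult \<Rightarrow> 'a::complete_space \<Rightarrow> 'a" and k K k' \<mu> \<alpha> :: real
  assumes sg: "semigroup_action act"
  and H: "\<forall>x y. Dsup x (orbit act y) \<le> Dsup x (orbit act x) \<longrightarrow>
           (\<forall>s. (INF t. Dsup (act s x) (orbit act (act1 act t (act s y))))
                  \<le> ereal k * Dsup x (orbit act y))"
  and K: "K = max k 0" and Kk: "K < k'"
  and mu: "0 < \<mu>" "\<mu> < 1" and al: "0 < \<alpha>" "\<alpha> < 1"
  and REG: "\<And>(x::'a) y r. r > 0 \<Longrightarrow> dist x y \<ge> (1-\<mu>)*r \<Longrightarrow>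
     \<exists>z. cball x ((1+\<mu>)*r) \<inter> cball y (k'*(1+\<mu>)*r) \<subseteq> cball z (\<alpha>*r)"
begin

abbreviation orb where "orb x \<equiv> orbit act x"

lemma K0: "0 \<le> K" using K by simp
lemma k'0: "0 < k'" using K0 Kk by simp

lemma orb_sub: "w \<in> orb x \<Longrightarrow> orb w \<subseteq> orb x"
  using orbit_mono[OF sg] by blast

lemma act1_in: "act1 act t (act s w) \<in> orb w"
  using orb_sub[OF orbit_act[of act s w]] orbit_act1[of act t "act s w"] by blast

lemma Hstep:
  assumes cond: "Dsup x (orb y) \<le> Dsup x (orb x)" and sub: "orb y \<subseteq> cball x a" and b: "K*a < b"
  shows "\<exists>t. orb (act1 act t (act s y)) \<subseteq> cball (act s x) b"
proof -
  have inf: "(INF t. Dsup (act s x) (orb (act1 act t (act s y)))) \<le> ereal k * Dsup x (orb y)"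
    using H cond by blast
  have dy: "dist x y \<le> a" using sub orbit_self[of y act] by auto
  have a0: "0 \<le> a" using dy zero_le_dist[of x y] by linarith
  have Dle: "Dsup x (orb y) \<le> ereal a" using sub by (intro Dsup_le) auto
  have Dge: "ereal (dist x y) \<le> Dsup x (orb y)" using Dsup_ge[OF orbit_self] .
  obtain d where dd: "Dsup x (orb y) = ereal d"
    using Dle Dge by (cases "Dsup x (orb y)") auto
  have "dist x y \<le> d" "d \<le> a" using Dle Dge dd by auto
  then have d: "Dsup x (orb y) = ereal d" "0 \<le> d" "d \<le> a"
    using dd zero_le_dist[of x y] by linarith+
  have "k * d \<le> K * a"
  proof (cases "0 \<le> k")
    case True then have "K = k" using K by simp
    then show ?thesis using True d by (simp add: mult_left_mono)
  next
    case False then have "k * d \<le> 0" using d by (simp add: mult_nonpos_nonneg)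
    then show ?thesis using K0 a0 by (meson mult_nonneg_nonneg order_trans)
  qed
  then have "ereal k * Dsup x (orb y) < ereal b" using d b by simp
  then have "(INF t. Dsup (act s x) (orb (act1 act t (act s y)))) < ereal b" using inf by simp
  then obtain t where "Dsup (act s x) (orb (act1 act t (act s y))) < ereal b"
    by (auto simp: INF_less_iff)
  then have "orb (act1 act t (act s y)) \<subseteq> cball (act s x) b"
    using Dsup_lessD by (fastforce simp: less_imp_le)
  then show ?thesis by blast
qed

lemma cond_of:
  assumes "orb y \<subseteq> cball x a" "v \<in> orb x" "a \<le> dist x v"
  shows "Dsup x (orb y) \<le> Dsup x (orb x)"
proof -
  have "Dsup x (orb y) \<le> ereal a" using assms(1) by (intro Dsup_le) auto
  also have "\<dots> \<le> ereal (dist x v)" using assms(3) by simp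
  also have "\<dots> \<le> Dsup x (orb x)" using Dsup_ge[OF assms(2)] .
  finally show ?thesis .
qed

definition rad where "rad x = Sup (dist x ` orb x)"

lemma bdd: "bounded (orb x) \<Longrightarrow> bdd_above (dist x ` orb x)"
  by (auto simp: bounded_any_center[of _ x] bdd_above_def)

lemma rad_ub:
  assumes "bounded (orb x)" shows "orb x \<subseteq> cball x (rad x)"
proof
  fix v assume "v \<in> orb x"
  then have "dist x v \<le> Sup (dist x ` orb x)" using bdd[OF assms] by (intro cSup_upper) auto
  then show "v \<in> cball x (rad x)" by (simp add: rad_def)
qed

lemma rad_le: "orb x \<subseteq> cball x a \<Longrightarrow> rad x \<le> a"
  unfolding rad_def using orbit_self[of x act] by (intro cSup_least) auto

lemma rad_near: "bounded (orb x) \<Longrightarrow> \<theta> < rad x \<Longrightarrow> \<exists>v\<in>orb x. \<theta> < dist x v"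
  unfolding rad_def using bdd orbit_self[of x act] by (subst (asm) less_cSup_iff) auto

lemma rad_nonneg: "bounded (orb x) \<Longrightarrow> 0 \<le> rad x"
  using rad_ub orbit_self[of x act] by fastforce

lemma rad_zero: "bounded (orb x) \<Longrightarrow> rad x = 0 \<Longrightarrow> act s x = x"
  using rad_ub[of x] orbit_act[of act s x] by auto

lemma bounded_of: "orb y \<subseteq> cball y a \<Longrightarrow> bounded (orb y)"
  using bounded_cball bounded_subset by blast

definition mset where "mset x = {a. 0 \<le> a \<and> (\<exists>z. \<exists>w\<in>orb x. orb w \<subseteq> cball z a)}"
definition m where "m x = Inf (mset x)"

lemma mset_rad:
  assumes "bounded (orb x)" shows "rad x \<in> mset x"
proof -
  have "0 \<le> rad x" "x \<in> orb x" "orb x \<subseteq> cball x (rad x)"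
    using rad_nonneg[OF assms] orbit_self[of x act] rad_ub[OF assms] by auto
  then show ?thesis unfolding mset_def by blast
qed

lemma bddm: "bdd_below (mset x)" unfolding mset_def bdd_below_def by auto

lemma m_lower: "a \<in> mset x \<Longrightarrow> m x \<le> a"
  unfolding m_def by (rule cInf_lower[OF _ bddm])

lemma m_nonneg: assumes "bounded (orb x)" shows "0 \<le> m x"
  unfolding m_def
proof (rule cInf_greatest)
  show "mset x \<noteq> {}" using mset_rad[OF assms] by blast
next
  fix a assume "a \<in> mset x" then show "0 \<le> a" by (simp add: mset_def)
qed

lemma m_near: assumes "bounded (orb x)" "m x < c" shows "\<exists>a\<in>mset x. a < c"
proof -
  have ne: "mset x \<noteq> {}" using mset_rad[OF assms(1)] by blast
  show ?thesis using assms(2) unfolding m_def by (simp add: cInf_less_iff[OF ne bddm])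
qed

lemma P1:
  assumes bx: "bounded (orb x)" and R: "0 < rad x"
  shows "m x \<le> \<alpha> * rad x"
proof -
  define R where "R = rad x"
  have "(1-\<mu>)*R < R" using mu R R_def by simp
  then obtain v where v: "v \<in> orb x" "(1-\<mu>)*R < dist x v" using rad_near[OF bx] R_def by blast
  have "0 < (1-\<mu>)*R" using mu R R_def by simp
  then have "v \<noteq> x" using v by auto
  then obtain s where s: "v = act s x" using orbit_cases[OF v(1)] by blast
  have subR: "orb x \<subseteq> cball x R" using rad_ub[OF bx] R_def by simp
  have "K*R < k'*(1+\<mu>)*R"
  proof -
    have "K*R < k'*R" using Kk R R_def by simp
    also have "k'*R \<le> k'*(1+\<mu>)*R" using k'0 mu R R_def by (simp add: mult_left_mono)
    finally show ?thesis .
  qed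
  then obtain t where t: "orb (act1 act t (act s x)) \<subseteq> cball (act s x) (k'*(1+\<mu>)*R)"
    using Hstep[OF order_refl subR] by blast
  define w where "w = act1 act t (act s x)"
  have w: "w \<in> orb x" using act1_in w_def by blast
  have "orb w \<subseteq> cball x ((1+\<mu>)*R)"
  proof -
    have "cball x R \<subseteq> cball x ((1+\<mu>)*R)" using mu R R_def by (intro subset_cball) simp
    then show ?thesis using orb_sub[OF w] subR by blast
  qed
  moreover obtain z where z: "cball x ((1+\<mu>)*R) \<inter> cball (act s x) (k'*(1+\<mu>)*R) \<subseteq> cball z (\<alpha>*R)"
    using REG[of R x "act s x"] R R_def v s by fastforce
  ultimately have "orb w \<subseteq> cball z (\<alpha>*R)" using t w_def by blast
  then have "\<alpha>*R \<in> mset x" unfolding mset_def using w al R R_def by auto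
  then show ?thesis using m_lower R_def by blast
qed

lemma P2:
  assumes bx: "bounded (orb x)" and m0: "0 < m x" and w: "w \<in> orb x"
    and sub: "orb w \<subseteq> cball y a" and a: "a < (1+\<mu>) * m x"
  shows "orb y \<subseteq> cball y a"
proof (rule ccontr)
  assume "\<not> orb y \<subseteq> cball y a"
  then obtain v where v: "v \<in> orb y" "a < dist y v" by (auto simp: subset_iff not_le)
  have "dist y w \<le> a" using sub orbit_self[of w act] by auto
  then have a0: "0 \<le> a" using zero_le_dist[of y w] by linarith
  have "a \<in> mset x" unfolding mset_def using a0 w sub by blast
  then have ma: "m x \<le> a" by (rule m_lower)
  have cond: "Dsup y (orb w) \<le> Dsup y (orb y)" using cond_of[OF sub v(1)] v(2) by simp
  have small: "dist y (act s y) < (1-\<mu>) * m x" for s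
  proof (rule ccontr)
    assume "\<not> ?thesis"
    then have ds: "(1-\<mu>) * m x \<le> dist y (act s y)" by simp
    have "K*a < k'*(1+\<mu>)*m x"
    proof -
      have "K*a \<le> K*((1+\<mu>)*m x)" using K0 a by (simp add: mult_left_mono)
      also have "\<dots> < k'*(1+\<mu>)*m x" using Kk mu m0 by simp
      finally show ?thesis .
    qed
    then obtain t where t: "orb (act1 act t (act s w)) \<subseteq> cball (act s y) (k'*(1+\<mu>)*m x)"
      using Hstep[OF cond sub] by blast
    define w' where "w' = act1 act t (act s w)"
    have w'w: "w' \<in> orb w" using act1_in w'_def by blast
    have w'x: "w' \<in> orb x" using orb_sub[OF w] w'w by blast
    have "orb w' \<subseteq> cball y ((1+\<mu>)*m x)"
    proof -
      have "cball y a \<subseteq> cball y ((1+\<mu>)*m x)" using a by (intro subset_cball) simp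
      then show ?thesis using orb_sub[OF w'w] sub by blast
    qed
    moreover obtain z where z: "cball y ((1+\<mu>)*m x) \<inter> cball (act s y) (k'*(1+\<mu>)*m x) \<subseteq> cball z (\<alpha>*m x)"
      using REG[OF m0 ds] by blast
    ultimately have "orb w' \<subseteq> cball z (\<alpha>*m x)" using t w'_def by blast
    then have "\<alpha>*m x \<in> mset x" unfolding mset_def using w'x al m0 by auto
    then have "m x \<le> \<alpha> * m x" by (rule m_lower)
    then show False using al m0 by simp
  qed
  show False
  proof (cases "v = y")
    case True then show False using v a0 by simp
  next
    case False
    then obtain s where "v = act s y" using orbit_cases[OF v(1)] by blast
    then have "dist y v < (1-\<mu>) * m x" using small[of s] by simp
    moreover have "(1-\<mu>) * m x \<le> m x" using mu m0 by simp
    ultimately show False using v(2) ma by linarith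
  qed
qed

lemma P3:
  assumes sub: "orb w \<subseteq> cball y a"
  shows "orb y \<subseteq> cball y ((K+1)*a)"
proof (rule ccontr)
  assume "\<not> orb y \<subseteq> cball y ((K+1)*a)"
  then obtain v where v: "v \<in> orb y" "(K+1)*a < dist y v" by (auto simp: subset_iff not_le)
  have "dist y w \<le> a" using sub orbit_self[of w act] by auto
  then have a0: "0 \<le> a" using zero_le_dist[of y w] by linarith
  have "a \<le> (K+1)*a" using a0 K0 by (simp add: distrib_right)
  then have cond: "Dsup y (orb w) \<le> Dsup y (orb y)" using cond_of[OF sub v(1)] v(2) by simp
  have "0 \<le> (K+1)*a" using a0 K0 by simp
  then have "v \<noteq> y" using v by auto
  then obtain s where s: "v = act s y" using orbit_cases[OF v(1)] by blast
  define \<eta> where "\<eta> = (dist y v - (K+1)*a)/2"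
  have eta: "0 < \<eta>" using v \<eta>_def by simp
  have "K*a < K*a + \<eta>" using eta by simp
  then obtain t where t: "orb (act1 act t (act s w)) \<subseteq> cball (act s y) (K*a + \<eta>)"
    using Hstep[OF cond sub] by blast
  define w' where "w' = act1 act t (act s w)"
  have w'w: "w' \<in> orb w" using act1_in w'_def by blast
  have d1: "dist y w' \<le> a" using sub w'w by auto
  have d2: "dist w' (act s y) \<le> K*a + \<eta>" using t orbit_self[of w' act] w'_def
    by (auto simp: dist_commute)
  have ka: "(K+1)*a = K*a + a" by (simp add: distrib_right)
  have "dist y v \<le> dist y w' + dist w' (act s y)" using s dist_triangle by simp
  then have e1: "dist y v \<le> a + (K*a + \<eta>)" using d1 d2 by linarith
  have e2: "2 * \<eta> = dist y v - (K+1)*a" by (simp add: \<eta>_def)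
  show False using e1 e2 v(2) ka by linarith
qed

definition q where "q = (1 + \<alpha>)/2"

lemma q1: "0 \<le> q" "q < 1" using al q_def by auto

lemma STEP:
  assumes bx: "bounded (orb x)" and R: "0 < rad x"
  shows "\<exists>y. bounded (orb y) \<and> rad y \<le> q * rad x \<and> dist x y \<le> 2 * rad x"
proof -
  define R where "R = rad x"
  have mR: "m x \<le> \<alpha> * R" using P1[OF bx R] R_def by simp
  have "\<alpha> < q" using al q_def by auto
  then have aqR: "\<alpha> * R < q * R" using R R_def by simp
  have qRR: "q * R \<le> R" using q1 R R_def by simp
  have subR: "orb x \<subseteq> cball x R" using rad_ub[OF bx] R_def by simp
  have dist_w: "dist x w \<le> R" if "w \<in> orb x" for w using subR that by auto
  show ?thesis
  proof (cases "0 < m x")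
    case True
    define c where "c = min ((1+\<mu>) * m x) (q * R)"
    have "m x < c" using True mu mR aqR c_def by simp
    then obtain a where a: "a \<in> mset x" "a < c" using m_near[OF bx] by blast
    then obtain z w where zw: "0 \<le> a" "w \<in> orb x" "orb w \<subseteq> cball z a" unfolding mset_def by blast
    have "orb z \<subseteq> cball z a" using P2[OF bx True zw(2) zw(3)] a c_def by simp
    then have bz: "bounded (orb z)" and rz: "rad z \<le> a" using bounded_of rad_le by auto
    have "dist w z \<le> a" using zw(3) orbit_self[of w act] by (auto simp: dist_commute)
    then have "dist x z \<le> R + a" using dist_w[OF zw(2)] dist_triangle[of x z w] by linarith
    moreover have "a \<le> q * R" using a c_def by simp
    ultimately show ?thesis using bz rz R_def qRR by (intro exI[of _ z]) auto
  next
    case False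
    then have m0: "m x = 0" using m_nonneg[OF bx] by simp
    define c where "c = q * R / (K+1)"
    have "0 < c" using q1 al R R_def K0 c_def q_def by simp
    then obtain a where a: "a \<in> mset x" "a < c" using m_near[OF bx] m0 by auto
    then obtain z w where zw: "0 \<le> a" "w \<in> orb x" "orb w \<subseteq> cball z a" unfolding mset_def by blast
    have "orb z \<subseteq> cball z ((K+1)*a)" using P3[OF zw(3)] .
    then have bz: "bounded (orb z)" and rz: "rad z \<le> (K+1)*a" using bounded_of rad_le by auto
    have ka: "(K+1)*a < q*R" using a c_def K0 by (simp add: field_simps)
    have aa: "a \<le> (K+1)*a" using zw(1) K0 by (simp add: distrib_right)
    have "dist w z \<le> a" using zw(3) orbit_self[of w act] by (auto simp: dist_commute)
    then have "dist x z \<le> R + a" using dist_w[OF zw(2)] dist_triangle[of x z w] by linarith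
    then show ?thesis using bz rz ka aa R_def qRR by (intro exI[of _ z]) auto
  qed
qed

end



theorem theorem4p1:
  fixes act :: "'s::semigroup_mult \<Rightarrow> 'a::complete_space \<Rightarrow> 'a"
    and k :: real
  assumes "semigroup_action act"
    and "ereal k < lifschitz_char TYPE('a)"
    and "\<forall>x y. Dsup x (orbit act y) \<le> Dsup x (orbit act x) \<longrightarrow>
           (\<forall>s. (INF t. Dsup (act s x) (orbit act (act1 act t (act s y))))
                  \<le> ereal k * Dsup x (orbit act y))"
  shows "(\<forall>x. \<not> bounded (orbit act x)) \<or> (\<exists>x. \<forall>s. act s x = x)"
proof -
  obtain c where c: "1 \<le> c" "c_regular TYPE('a) c" "k < c"
  proof -
    from assms(2) obtain y where "y \<in> {ereal c | c. c \<ge> 1 \<and> c_regular TYPE('a) c}" "ereal k < y"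
      unfolding lifschitz_char_def by (auto simp: less_Sup_iff)
    then show ?thesis using that by auto
  qed
  define K where "K = max k 0"
  define k' where "k' = (K + c)/2"
  have Kk: "K < k'" "k' < c" using c K_def k'_def by auto
  have kk': "k < k'" "0 < k'" using Kk K_def by auto
  obtain \<mu> \<alpha> where mual: "0 < \<mu>" "\<mu> < 1" "0 < \<alpha>" "\<alpha> < 1"
    and reg: "\<forall>(x::'a) y r. r > 0 \<and> dist x y \<ge> (1 - \<mu>) * r \<longrightarrow>
           (\<exists>z. cball x ((1 + \<mu>) * r) \<inter> cball y (k' * (1 + \<mu>) * r) \<subseteq> cball z (\<alpha> * r))"
    using c(2) Kk(2) unfolding c_regular_def by blast
  have REG': "\<exists>z. cball x ((1+\<mu>)*r) \<inter> cball y (k'*(1+\<mu>)*r) \<subseteq> cball z (\<alpha>*r)"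
    if "r > 0" "dist x y \<ge> (1-\<mu>)*r" for x y :: 'a and r
    using reg that by (metis (no_types, lifting))
  interpret fpctx act k K k' \<mu> \<alpha>
    by (unfold_locales; (fact assms(1) assms(3) REG')?; simp add: K_def Kk(1) mual kk')
  show ?thesis
  proof (rule ccontr)
    assume neg: "\<not> ?thesis"
    then obtain x0 where b0: "bounded (orb x0)" by auto
    have nofix: "\<not> (\<forall>s. act s x = x)" for x using neg by auto
    have radpos: "0 < rad x" if "bounded (orb x)" for x
    proof -
      have "rad x \<noteq> 0" using rad_zero[OF that] nofix by blast
      then show ?thesis using rad_nonneg[OF that] by simp
    qed
    have "\<forall>x. \<exists>y. bounded (orb x) \<longrightarrow> bounded (orb y) \<and> rad y \<le> q * rad x \<and> dist x y \<le> 2 * rad x"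
      using STEP radpos by blast
    then obtain f where f: "\<And>x. bounded (orb x) \<Longrightarrow>
        bounded (orb (f x)) \<and> rad (f x) \<le> q * rad x \<and> dist x (f x) \<le> 2 * rad x"
      by metis
    define X where "X n = (f ^^ n) x0" for n
    define R0 where "R0 = rad x0"
    have R0: "0 < R0" using radpos[OF b0] R0_def by simp
    have XS: "X (Suc n) = f (X n)" for n by (simp add: X_def)
    have inv: "bounded (orb (X n)) \<and> rad (X n) \<le> q^n * R0" for n
    proof (induction n)
      case 0 then show ?case using b0 by (simp add: X_def R0_def)
    next
      case (Suc n)
      then have "bounded (orb (X (Suc n)))" "rad (X (Suc n)) \<le> q * rad (X n)" using f XS by auto
      moreover have "q * rad (X n) \<le> q * (q^n * R0)" using Suc q1 by (simp add: mult_left_mono)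
      ultimately show ?case by simp
    qed
    have dstep: "dist (X n) (X (Suc n)) \<le> (2*R0) * q^n" for n
    proof -
      have "dist (X n) (X (Suc n)) \<le> 2 * rad (X n)" using f[of "X n"] inv[of n] XS[of n] by auto
      then show ?thesis using inv[of n] by (simp add: mult_ac)
    qed
    have "Cauchy X" using geom_Cauchy[OF q1 dstep] .
    then obtain z where z: "X \<longlonglongrightarrow> z" using Cauchy_convergent_iff convergent_def by blast
    have "act s z = z" for s
    proof (rule ccontr)
      assume ne: "act s z \<noteq> z"
      define \<delta> where "\<delta> = dist z (act s z)"
      have \<delta>: "0 < \<delta>" using ne \<delta>_def by simp
      define \<epsilon> where "\<epsilon> = \<delta> / (2*(K+1))"
      have \<epsilon>: "0 < \<epsilon>" using \<delta> K0 \<epsilon>_def by simp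
      have K2e: "(K+1) * (2 * \<epsilon>) = \<delta>" using K0 \<epsilon>_def by (simp add: field_simps)
      obtain N where N: "\<forall>n\<ge>N. dist (X n) z < \<epsilon>" using z \<epsilon> by (auto simp: lim_sequentially)
      have "0 < \<epsilon> / R0" using \<epsilon> R0 by simp
      then obtain n0 where n0: "q^n0 < \<epsilon> / R0" using real_arch_pow_inv q1 by blast
      define n where "n = max N n0"
      have "q^n \<le> q^n0" using q1 n_def by (intro power_decreasing) auto
      then have "q^n * R0 \<le> q^n0 * R0" using R0 by (intro mult_right_mono) auto
      moreover have "q^n0 * R0 < \<epsilon>" using n0 R0 by (simp add: field_simps)
      ultimately have "q^n * R0 < \<epsilon>" by linarith
      then have rp: "rad (X n) < \<epsilon>" using inv[of n] by linarith
      have dz: "dist z (X n) < \<epsilon>" using N n_def by (simp add: dist_commute)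
      define p where "p = X n"
      define a where "a = dist z p + rad p"
      have sub: "orb p \<subseteq> cball z a"
      proof
        fix v assume v: "v \<in> orb p"
        have "dist p v \<le> rad p" using rad_ub[of p] inv[of n] v p_def by auto
        then have "dist z v \<le> a" using dist_triangle[of z v p] a_def by linarith
        then show "v \<in> cball z a" by simp
      qed
      have a2: "a < 2 * \<epsilon>" using rp dz a_def p_def by simp
      have a0: "0 \<le> a" using a_def rad_nonneg[of p] inv[of n] p_def by simp
      have Ka: "(K+1) * a < \<delta>"
      proof -
        have "(K+1) * a < (K+1) * (2 * \<epsilon>)" using a2 K0 by (intro mult_strict_left_mono) auto
        then show ?thesis using K2e by simp
      qed
      have "a \<le> (K+1)*a" using a0 K0 by (simp add: distrib_right)
      then have cond: "Dsup z (orb p) \<le> Dsup z (orb z)"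
        using cond_of[OF sub orbit_act[of act s z]] Ka \<delta>_def by simp
      define \<eta> where "\<eta> = (\<delta> - (K+1)*a)/2"
      have "K*a < K*a + \<eta>" using Ka \<eta>_def by simp
      then obtain t where t: "orb (act1 act t (act s p)) \<subseteq> cball (act s z) (K*a + \<eta>)"
        using Hstep[OF cond sub] by blast
      define w' where "w' = act1 act t (act s p)"
      have w'p: "w' \<in> orb p" using act1_in w'_def by blast
      have d1: "dist z w' \<le> a" using sub w'p by auto
      have d2: "dist w' (act s z) \<le> K*a + \<eta>" using t orbit_self[of w' act] w'_def
        by (auto simp: dist_commute)
      have ka: "(K+1)*a = K*a + a" by (simp add: distrib_right)
      have "\<delta> \<le> dist z w' + dist w' (act s z)" using \<delta>_def dist_triangle by simp
      then have e1: "\<delta> \<le> a + (K*a + \<eta>)" using d1 d2 by linarith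
      have e2: "2 * \<eta> = \<delta> - (K+1)*a" by (simp add: \<eta>_def)
      show False using e1 e2 Ka ka by linarith
    qed
    then show False using nofix by blast
  qed
qed

end
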